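(* Let $T=(T_1,T_2)$ be a toral $2$-isometry on a complex Hilbert space $\mathcal H$. Then: (i) for all integers $k,l\ge0$, $$T_1^{*k}T_2^{*l}T_2^lT_1^k=T_1^{*k}T_1^k+T_2^{*l}T_2^l-I=kT_1^*T_1+lT_2^*T_2-(k+l-1)I;$$ (ii) if $f_0\in\ker T^*=\ker T_1^*\cap\ker T_2^*$ satisfies $\langle T_1^mf_0,T_1^pT_2^qf_0\rangle=0$ for all $q\ge1$, $m,p\ge0$, and $\langle T_2^nf_0,T_1^pT_2^qf_0\rangle=0$ for all $p\ge1$, $n,q\ge0$, then for all $m,n,p,q\ge0$, $$\langle T_1^mT_2^nf_0,T_1^pT_2^qf_0\rangle=\begin{cases}0 & m\ne p,\ n\ne q,\\ \langle T_2^nf_0,T_2^qf_0\rangle & m=p,\ n\ne q,\\ \langle T_1^mf_0,T_1^pf_0\rangle & m\ne p,\ n=q,\\ \|T_1^mf_0\|^2+\|T_2^nf_0\|^2-\|f_0\|^2 & m=p,\ n=q.\end{cases}$$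
   Context: A commuting pair $T=(T_1,T_2)$ of bounded operators on $\mathcal H$ is a toral $2$-isometry if $I-T_i^*T_i-T_j^*T_j+T_j^*T_i^*T_iT_j=0$ for all $i,j\in\{1,2\}$. *)

theory Defs
  imports Complex_Main
begin

class complex_vector = ab_group_add +
  fixes scaleC :: "complex \<Rightarrow> 'a \<Rightarrow> 'a" (infixr "*\<^sub>C" 75)
  assumes scaleC_add_right: "a *\<^sub>C (x + y) = a *\<^sub>C x + a *\<^sub>C y"
    and scaleC_add_left: "(a + b) *\<^sub>C x = a *\<^sub>C x + b *\<^sub>C x"
    and scaleC_scaleC: "a *\<^sub>C (b *\<^sub>C x) = (a * b) *\<^sub>C x"
    and scaleC_one: "1 *\<^sub>C x = x"

class complex_inner = complex_vector +
  fixes cinner :: "'a \<Rightarrow> 'a \<Rightarrow> complex"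
  assumes cinner_add_left: "cinner (x + y) z = cinner x z + cinner y z"
    and cinner_scaleC_left: "cinner (a *\<^sub>C x) y = a * cinner x y"
    and cinner_commute: "cinner y x = cnj (cinner x y)"
    and cinner_ge_zero: "0 \<le> Re (cinner x x)"
    and cinner_eq_zero_iff: "cinner x x = 0 \<longleftrightarrow> x = 0"

definition cnorm :: "'a::complex_inner \<Rightarrow> real" where
  "cnorm x = sqrt (Re (cinner x x))"

class complex_hilbert = complex_inner +
  assumes cauchy_convergent:
    "(\<forall>e>0. \<exists>N. \<forall>m\<ge>N. \<forall>n\<ge>N. sqrt (Re (cinner (X m - X n) (X m - X n))) < e)
      \<Longrightarrow> \<exists>L. (\<lambda>n. sqrt (Re (cinner (X n - L) (X n - L)))) \<longlonglongrightarrow> 0"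

definition bounded_op :: "('a::complex_inner \<Rightarrow> 'a) \<Rightarrow> bool" where
  "bounded_op T \<longleftrightarrow> (\<forall>x y. T (x + y) = T x + T y) \<and> (\<forall>a x. T (a *\<^sub>C x) = a *\<^sub>C T x)
     \<and> (\<exists>K. \<forall>x. cnorm (T x) \<le> K * cnorm x)"

definition is_adjoint :: "('a::complex_inner \<Rightarrow> 'a) \<Rightarrow> ('a \<Rightarrow> 'a) \<Rightarrow> bool" where
  "is_adjoint T S \<longleftrightarrow> (\<forall>x y. cinner (T x) y = cinner x (S y))"

definition toral_2isometry :: "(nat \<Rightarrow> 'a::complex_inner \<Rightarrow> 'a) \<Rightarrow> (nat \<Rightarrow> 'a \<Rightarrow> 'a) \<Rightarrow> bool" where
  "toral_2isometry T S \<longleftrightarrow> T 1 \<circ> T 2 = T 2 \<circ> T 1 \<and>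
     (\<forall>i\<in>{1,2}. \<forall>j\<in>{1,2}. \<forall>x.
        x - S i (T i x) - S j (T j x) + S j (S i (T i (T j x))) = 0)"

end

theory Submission
  imports Defs
begin


lemma ci_zero_left: "cinner (0::'a::complex_inner) y = 0"
proof -
  have "cinner (0::'a) y = cinner (0 + 0) y" by simp
  also have "\<dots> = cinner 0 y + cinner 0 y" by (rule cinner_add_left)
  finally show ?thesis by simp
qed

lemma ci_zero_right: "cinner (y::'a::complex_inner) 0 = 0"
  by (metis cinner_commute ci_zero_left complex_cnj_zero)

lemma ci_diff_left: "cinner ((x::'a::complex_inner) - y) z = cinner x z - cinner y z"
proof -
  have "cinner x z = cinner ((x - y) + y) z" by simp
  also have "\<dots> = cinner (x - y) z + cinner y z" by (rule cinner_add_left)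
  finally show ?thesis by simp
qed

lemma ci_ext:
  fixes a b :: "'a::complex_inner"
  assumes "\<And>y. cinner a y = cinner b y" shows "a = b"
proof -
  have "cinner (a - b) (a - b) = 0" using assms[of "a - b"] by (simp add: ci_diff_left)
  then show ?thesis by (simp add: cinner_eq_zero_iff)
qed

lemma adj_left: "is_adjoint T S \<Longrightarrow> cinner (S a) b = cinner a (T b)"
  unfolding is_adjoint_def by (metis cinner_commute)

lemma adj_pow: "is_adjoint T S \<Longrightarrow> cinner ((S^^k) a) b = cinner a ((T^^k) b)"
proof (induction k arbitrary: b)
  case 0 then show ?case by simp
next
  case (Suc k)
  have "cinner ((S^^Suc k) a) b = cinner (S ((S^^k) a)) b" by simp
  also have "\<dots> = cinner ((S^^k) a) (T b)" using adj_left[OF Suc.prems] .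
  also have "\<dots> = cinner a ((T^^k) (T b))" using Suc by simp
  also have "\<dots> = cinner a ((T^^Suc k) b)" by (simp add: funpow_Suc_right del: funpow.simps)
  finally show ?case .
qed

lemma one_var:
  fixes A :: "'a::complex_inner \<Rightarrow> 'a"
  assumes "\<And>x y. cinner (A (A x)) (A (A y)) - 2 * cinner (A x) (A y) + cinner x y = 0"
  shows "cinner ((A^^n) x) ((A^^n) y) = of_nat n * cinner (A x) (A y) - (of_nat n - 1) * cinner x y"
proof (induction n arbitrary: x y)
  case 0 then show ?case by simp
next
  case (Suc n)
  have e: "(A^^Suc n) z = (A^^n) (A z)" for z by (simp add: funpow_Suc_right del: funpow.simps)
  have "cinner ((A^^Suc n) x) ((A^^Suc n) y)
     = of_nat n * cinner (A (A x)) (A (A y)) - (of_nat n - 1) * cinner (A x) (A y)"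
    unfolding e by (rule Suc.IH)
  also have "cinner (A (A x)) (A (A y)) = 2 * cinner (A x) (A y) - cinner x y"
    using assms[of x y] by (simp add: algebra_simps eq_neg_iff_add_eq_0)
  finally show ?case by (simp add: algebra_simps)
qed

lemma funpow_comm1:
  assumes "\<And>x. f (g x) = g (f x)" shows "f ((g^^n) x) = (g^^n) (f x)"
  by (induction n) (simp_all add: assms)

lemma funpow_comm:
  assumes "\<And>x. f (g x) = g (f x)" shows "(f^^m) ((g^^n) x) = (g^^n) ((f^^m) x)"
  by (induction m) (simp_all add: funpow_comm1[of f g, OF assms])

lemma cnorm_sq: "complex_of_real (cnorm x ^ 2) = cinner x x"
proof -
  have r: "Im (cinner x x) = 0" using arg_cong[OF cinner_commute[of x x], of Im] by simp
  have "cnorm x ^ 2 = Re (cinner x x)" unfolding cnorm_def using cinner_ge_zero[of x] by simp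
  then show ?thesis using r by (simp add: complex_eq_iff)
qed

lemma res_lemma:
  fixes V :: "nat \<Rightarrow> nat \<Rightarrow> 'a" and ci :: "'a \<Rightarrow> 'a \<Rightarrow> complex" and f0 :: 'a
  assumes V00: "V 0 0 = f0"
  and Z0: "\<And>m n. m > 0 \<or> n > 0 \<Longrightarrow> ci (V m n) f0 = 0"
  and Z0': "\<And>m n. m > 0 \<or> n > 0 \<Longrightarrow> ci f0 (V m n) = 0"
  and H1: "\<And>m p q. q \<ge> 1 \<Longrightarrow> ci (V m 0) (V p q) = 0"
  and H1': "\<And>m p q. q \<ge> 1 \<Longrightarrow> ci (V p q) (V m 0) = 0"
  and H2: "\<And>n p q. p \<ge> 1 \<Longrightarrow> ci (V 0 n) (V p q) = 0"
  and H2': "\<And>n p q. p \<ge> 1 \<Longrightarrow> ci (V p q) (V 0 n) = 0"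
  and S: "ci (V m n) (V p q) = ci (V m (n - min n q)) (V p (q - min n q))
        + ci (V (m - min m p) n) (V (p - min m p) q)
        - ci (V (m - min m p) (n - min n q)) (V (p - min m p) (q - min n q))"
  shows "ci (V m n) (V p q) = (if m \<noteq> p \<and> n \<noteq> q then 0
               else if m = p \<and> n \<noteq> q then ci (V 0 n) (V 0 q)
               else if m \<noteq> p \<and> n = q then ci (V m 0) (V p 0)
               else ci (V m 0) (V m 0) + ci (V 0 n) (V 0 n) - ci f0 f0)"
proof -
      consider "m < p" | "m = p" | "m > p" by linarith
      then show ?thesis
      proof cases
        case 1
        then consider "n < q" | "n = q" | "n > q" by linarith
        then show ?thesis
          by cases (use 1 in \<open>subst S, simp add: H1 H1' H2 H2' Z0 Z0' V00\<close>)+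
      next
        case 2
        then consider "n < q" | "n = q" | "n > q" by linarith
        then show ?thesis
          by cases (use 2 in \<open>subst S, simp add: H1 H1' H2 H2' Z0 Z0' V00\<close>)+
      next
        case 3
        then consider "n < q" | "n = q" | "n > q" by linarith
        then show ?thesis
          by cases (use 3 in \<open>subst S, simp add: H1 H1' H2 H2' Z0 Z0' V00\<close>)+
      qed
qed

theorem lemma6p1:
  fixes T S :: "nat \<Rightarrow> 'a::complex_hilbert \<Rightarrow> 'a"
  assumes bounded: "bounded_op (T 1)" "bounded_op (T 2)"
    and adj: "is_adjoint (T 1) (S 1)" "is_adjoint (T 2) (S 2)"
    and tor: "toral_2isometry T S"
  shows
    "(\<forall>k l x.
        (S 1 ^^ k) ((S 2 ^^ l) ((T 2 ^^ l) ((T 1 ^^ k) x)))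
          = (S 1 ^^ k) ((T 1 ^^ k) x) + (S 2 ^^ l) ((T 2 ^^ l) x) - x
      \<and> (S 1 ^^ k) ((S 2 ^^ l) ((T 2 ^^ l) ((T 1 ^^ k) x)))
          = of_nat k *\<^sub>C S 1 (T 1 x) + of_nat l *\<^sub>C S 2 (T 2 x)
            - (of_nat k + of_nat l - 1) *\<^sub>C x)
     \<and>
     (\<forall>f0. S 1 f0 = 0 \<and> S 2 f0 = 0
        \<and> (\<forall>q m p. q \<ge> 1 \<longrightarrow>
              cinner ((T 1 ^^ m) f0) ((T 1 ^^ p) ((T 2 ^^ q) f0)) = 0)
        \<and> (\<forall>p n q. p \<ge> 1 \<longrightarrow>
              cinner ((T 2 ^^ n) f0) ((T 1 ^^ p) ((T 2 ^^ q) f0)) = 0)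
      \<longrightarrow> (\<forall>m n p q.
            cinner ((T 1 ^^ m) ((T 2 ^^ n) f0)) ((T 1 ^^ p) ((T 2 ^^ q) f0))
            = (if m \<noteq> p \<and> n \<noteq> q then 0
               else if m = p \<and> n \<noteq> q then cinner ((T 2 ^^ n) f0) ((T 2 ^^ q) f0)
               else if m \<noteq> p \<and> n = q then cinner ((T 1 ^^ m) f0) ((T 1 ^^ p) f0)
               else complex_of_real (cnorm ((T 1 ^^ m) f0) ^ 2 + cnorm ((T 2 ^^ n) f0) ^ 2
                                     - cnorm f0 ^ 2))))"
proof -
  define A where "A = T 1"
  define B where "B = T 2"
  define SA where "SA = S 1"
  define SB where "SB = S 2"
  have adjA: "is_adjoint A SA" and adjB: "is_adjoint B SB" using adj by (simp_all add: A_def B_def SA_def SB_def)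
  have comm: "A (B x) = B (A x)" for x
    using tor unfolding toral_2isometry_def A_def B_def by (metis comp_apply)
  have isoI: "cinner (T i (T i x)) (T i (T i y)) - 2 * cinner (T i x) (T i y) + cinner x y = 0"
    if i: "i \<in> {1,2}" for i x y
  proof -
    have ad: "is_adjoint (T i) (S i)" using adj i by auto
    have "x - S i (T i x) - S i (T i x) + S i (S i (T i (T i x))) = 0"
      using tor i unfolding toral_2isometry_def by blast
    then have "cinner (x - S i (T i x) - S i (T i x) + S i (S i (T i (T i x)))) y = 0"
      by (simp add: ci_zero_left)
    then have "cinner x y - 2 * cinner (T i x) (T i y) + cinner (T i (T i x)) (T i (T i y)) = 0"
      by (simp add: cinner_add_left ci_diff_left adj_left[OF ad])
    then show ?thesis by (simp add: algebra_simps)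
  qed
  have isoA: "cinner (A (A x)) (A (A y)) - 2 * cinner (A x) (A y) + cinner x y = 0" for x y
    unfolding A_def by (rule isoI) simp
  have isoB: "cinner (B (B x)) (B (B y)) - 2 * cinner (B x) (B y) + cinner x y = 0" for x y
    unfolding B_def by (rule isoI) simp
  have mixed: "cinner (A (B x)) (A (B y)) = cinner (A x) (A y) + cinner (B x) (B y) - cinner x y" for x y
  proof -
    have "\<forall>x. x - S 1 (T 1 x) - S 2 (T 2 x) + S 2 (S 1 (T 1 (T 2 x))) = 0"
      using tor unfolding toral_2isometry_def by blast
    then have "x - SA (A x) - SB (B x) + SB (SA (A (B x))) = 0"
      unfolding A_def B_def SA_def SB_def by blast
    then have "cinner (x - SA (A x) - SB (B x) + SB (SA (A (B x)))) y = 0"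
      by (simp add: ci_zero_left)
    then have "cinner x y - cinner (A x) (A y) - cinner (B x) (B y) + cinner (A (B x)) (A (B y)) = 0"
      by (simp add: cinner_add_left ci_diff_left adj_left[OF adjA] adj_left[OF adjB])
    then show ?thesis by (simp add: algebra_simps)
  qed
  define G where "G k l u v = cinner ((B^^l) ((A^^k) u)) ((B^^l) ((A^^k) v))" for k l u v
  have G1: "G k 1 u v = G k 0 u v + G 0 1 u v - cinner u v" for k u v
  proof (induction k)
    case 0 then show ?case by (simp add: G_def)
  next
    case (Suc k)
    have "G (Suc k) 1 u v = cinner (A (B ((A^^k) u))) (A (B ((A^^k) v)))"
      by (simp add: G_def comm)
    also have "\<dots> = G (Suc k) 0 u v + G k 1 u v - G k 0 u v"
      unfolding mixed by (simp add: G_def)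
    finally show ?case using Suc by simp
  qed
  have Gl: "G k l u v = of_nat l * G k 1 u v - (of_nat l - 1) * G k 0 u v" for k l u v
    unfolding G_def using one_var[of B, OF isoB] by simp
  have Gk0: "G k 0 u v = of_nat k * cinner (A u) (A v) - (of_nat k - 1) * cinner u v" for k u v
    unfolding G_def using one_var[of A, OF isoA] by simp
  have G0l: "G 0 l u v = of_nat l * cinner (B u) (B v) - (of_nat l - 1) * cinner u v" for l u v
    unfolding G_def using one_var[of B, OF isoB] by simp
  have weak: "G k l u v = G k 0 u v + G 0 l u v - cinner u v" for k l u v
  proof -
    have "G k l u v = of_nat l * (G k 0 u v + cinner (B u) (B v) - cinner u v) - (of_nat l - 1) * G k 0 u v"
      using Gl[of k l u v] G1[of k u v] G0l[of 1 u v] by simp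
    then show ?thesis by (simp add: G0l algebra_simps)
  qed
  have partI': "(SA ^^ k) ((SB ^^ l) ((B ^^ l) ((A ^^ k) x)))
          = (SA ^^ k) ((A ^^ k) x) + (SB ^^ l) ((B ^^ l) x) - x
      \<and> (SA ^^ k) ((SB ^^ l) ((B ^^ l) ((A ^^ k) x)))
          = of_nat k *\<^sub>C SA (A x) + of_nat l *\<^sub>C SB (B x)
            - (of_nat k + of_nat l - 1) *\<^sub>C x" for k l x
  proof -
    have L: "cinner ((SA ^^ k) ((SB ^^ l) ((B ^^ l) ((A ^^ k) x)))) y = G k l x y" for y
      unfolding adj_pow[OF adjA] adj_pow[OF adjB] G_def ..
    have W: "G k l x y = G k 0 x y + G 0 l x y - cinner x y" for y by (rule weak)
    have W2: "G k l x y = (of_nat k * cinner (A x) (A y) - (of_nat k - 1) * cinner x y)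
       + (of_nat l * cinner (B x) (B y) - (of_nat l - 1) * cinner x y) - cinner x y" for y
      unfolding W Gk0 G0l ..
    have P1: "cinner ((SA ^^ k) ((A ^^ k) x) + (SB ^^ l) ((B ^^ l) x) - x) y = G k l x y" for y
      unfolding cinner_add_left ci_diff_left adj_pow[OF adjA] adj_pow[OF adjB]
      using W[of y] by (simp add: G_def)
    have P2: "cinner (of_nat k *\<^sub>C SA (A x) + of_nat l *\<^sub>C SB (B x)
            - (of_nat k + of_nat l - 1) *\<^sub>C x) y = G k l x y" for y
      unfolding W2 cinner_add_left ci_diff_left cinner_scaleC_left adj_left[OF adjA] adj_left[OF adjB]
      by (simp add: algebra_simps)
    show ?thesis
      using ci_ext[of "(SA ^^ k) ((SB ^^ l) ((B ^^ l) ((A ^^ k) x)))" "(SA ^^ k) ((A ^^ k) x) + (SB ^^ l) ((B ^^ l) x) - x"]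
        ci_ext[of "(SA ^^ k) ((SB ^^ l) ((B ^^ l) ((A ^^ k) x)))" "of_nat k *\<^sub>C SA (A x) + of_nat l *\<^sub>C SB (B x)
            - (of_nat k + of_nat l - 1) *\<^sub>C x"]
      unfolding L P1 P2 by simp
  qed
  have partI: "(S 1 ^^ k) ((S 2 ^^ l) ((T 2 ^^ l) ((T 1 ^^ k) x)))
          = (S 1 ^^ k) ((T 1 ^^ k) x) + (S 2 ^^ l) ((T 2 ^^ l) x) - x
      \<and> (S 1 ^^ k) ((S 2 ^^ l) ((T 2 ^^ l) ((T 1 ^^ k) x)))
          = of_nat k *\<^sub>C S 1 (T 1 x) + of_nat l *\<^sub>C S 2 (T 2 x)
            - (of_nat k + of_nat l - 1) *\<^sub>C x" for k l x
    using partI'[of k l x] unfolding A_def B_def SA_def SB_def .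
  have partII: "cinner ((A ^^ m) ((B ^^ n) f0)) ((A ^^ p) ((B ^^ q) f0))
            = (if m \<noteq> p \<and> n \<noteq> q then 0
               else if m = p \<and> n \<noteq> q then cinner ((B ^^ n) f0) ((B ^^ q) f0)
               else if m \<noteq> p \<and> n = q then cinner ((A ^^ m) f0) ((A ^^ p) f0)
               else complex_of_real (cnorm ((A ^^ m) f0) ^ 2 + cnorm ((B ^^ n) f0) ^ 2
                                     - cnorm f0 ^ 2))"
    if k1: "SA f0 = 0" and k2: "SB f0 = 0"
      and h1: "\<forall>q m p. q \<ge> 1 \<longrightarrow> cinner ((A ^^ m) f0) ((A ^^ p) ((B ^^ q) f0)) = 0"
      and h2: "\<forall>p n q. p \<ge> 1 \<longrightarrow> cinner ((B ^^ n) f0) ((A ^^ p) ((B ^^ q) f0)) = 0"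
    for f0 m n p q
  proof -
    define V where "V m n = (A ^^ m) ((B ^^ n) f0)" for m n
    have V00: "V 0 0 = f0" by (simp add: V_def)
    have pc: "(A ^^ a) ((B ^^ b) z) = (B ^^ b) ((A ^^ a) z)" for a b z
      by (rule funpow_comm) (rule comm)
    have Vsplit: "V m n = (B ^^ b) ((A ^^ a) (V (m - a) (n - b)))" if "a \<le> m" "b \<le> n" for a b m n
    proof -
      have eA: "(A^^m) w = (A^^a) ((A^^(m-a)) w)" for w
      proof -
        have "(A^^m) w = (A^^(a + (m-a))) w" using that(1) by simp
        also have "\<dots> = (A^^a) ((A^^(m-a)) w)" by (simp only: funpow_add comp_apply)
        finally show ?thesis .
      qed
      have eB: "(B^^n) w = (B^^b) ((B^^(n-b)) w)" for w
      proof -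
        have "(B^^n) w = (B^^(b + (n-b))) w" using that(2) by simp
        also have "\<dots> = (B^^b) ((B^^(n-b)) w)" by (simp only: funpow_add comp_apply)
        finally show ?thesis .
      qed
      have "V m n = (A ^^ a) ((A ^^ (m-a)) ((B ^^ b) ((B ^^ (n-b)) f0)))"
        unfolding V_def eA eB ..
      also have "\<dots> = (A ^^ a) ((B ^^ b) ((A ^^ (m-a)) ((B ^^ (n-b)) f0)))" by (simp only: pc)
      also have "\<dots> = (B ^^ b) ((A ^^ a) (V (m - a) (n - b)))" by (simp only: pc V_def)
      finally show ?thesis .
    qed
    have Z0: "cinner (V m n) f0 = 0" if "m > 0 \<or> n > 0" for m n
    proof (cases "m > 0")
      case True
      have "V m n = A (V (m - 1) n)" using True by (cases m) (simp_all add: V_def)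
      then show ?thesis by (simp add: adjA[unfolded is_adjoint_def] k1 ci_zero_right)
    next
      case False
      then have "n > 0" using that by simp
      have cB: "B ((A^^m') y) = (A^^m') (B y)" for m' y by (rule funpow_comm1) (simp add: comm)
      from \<open>n > 0\<close> have "V m n = B (V m (n - 1))" by (cases n) (simp_all add: V_def cB)
      then show ?thesis by (simp add: adjB[unfolded is_adjoint_def] k2 ci_zero_right)
    qed
    have Z0': "cinner f0 (V m n) = 0" if "m > 0 \<or> n > 0" for m n
      using Z0[OF that] cinner_commute[of f0 "V m n"] by simp
    have H1: "cinner (V m 0) (V p q) = 0" if "q \<ge> 1" for m p q
      using h1 that by (simp add: V_def)
    have H1': "cinner (V p q) (V m 0) = 0" if "q \<ge> 1" for m p q
      using H1[OF that, of m p] cinner_commute[of "V p q" "V m 0"] by simp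
    have H2: "cinner (V 0 n) (V p q) = 0" if "p \<ge> 1" for n p q
      using h2 that by (simp add: V_def)
    have H2': "cinner (V p q) (V 0 n) = 0" if "p \<ge> 1" for n p q
      using H2[OF that, of n q] cinner_commute[of "V p q" "V 0 n"] by simp
    have VA: "(A ^^ a) (V m' n') = V (a + m') n'" for a m' n' by (simp add: V_def funpow_add)
    have star: "cinner (V m n) (V p q) = cinner (V m (n - b)) (V p (q - b))
        + cinner (V (m - a) n) (V (p - a) q) - cinner (V (m - a) (n - b)) (V (p - a) (q - b))"
      if "a \<le> m" "a \<le> p" "b \<le> n" "b \<le> q" for a b
    proof -
      have "cinner (V m n) (V p q) = G a b (V (m - a) (n - b)) (V (p - a) (q - b))"
        unfolding G_def using Vsplit[of a m b n] Vsplit[of a p b q] that by simp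
      also have "\<dots> = G a 0 (V (m - a) (n - b)) (V (p - a) (q - b))
           + G 0 b (V (m - a) (n - b)) (V (p - a) (q - b)) - cinner (V (m - a) (n - b)) (V (p - a) (q - b))"
        by (rule weak)
      also have "G a 0 (V (m - a) (n - b)) (V (p - a) (q - b)) = cinner (V m (n - b)) (V p (q - b))"
        unfolding G_def using that by (simp add: VA)
      also have "G 0 b (V (m - a) (n - b)) (V (p - a) (q - b)) = cinner (V (m - a) n) (V (p - a) q)"
        unfolding G_def using that Vsplit[of 0 "m - a" b n] Vsplit[of 0 "p - a" b q] by simp
      finally show ?thesis .
    qed
    have res: "cinner (V m n) (V p q)
            = (if m \<noteq> p \<and> n \<noteq> q then 0
               else if m = p \<and> n \<noteq> q then cinner (V 0 n) (V 0 q)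
               else if m \<noteq> p \<and> n = q then cinner (V m 0) (V p 0)
               else cinner (V m 0) (V m 0) + cinner (V 0 n) (V 0 n) - cinner f0 f0)"
    proof (rule res_lemma[where ci=cinner])
      show "cinner (V m n) (V p q) = cinner (V m (n - min n q)) (V p (q - min n q))
        + cinner (V (m - min m p) n) (V (p - min m p) q)
        - cinner (V (m - min m p) (n - min n q)) (V (p - min m p) (q - min n q))"
        by (rule star) simp_all
    qed (fact V00 Z0 Z0' H1 H1' H2 H2')+
    have e: "complex_of_real (cnorm ((A ^^ m) f0) ^ 2 + cnorm ((B ^^ n) f0) ^ 2 - cnorm f0 ^ 2)
      = cinner ((A^^m) f0) ((A^^m) f0) + cinner ((B^^n) f0) ((B^^n) f0) - cinner f0 f0"
      by (simp only: of_real_add of_real_diff cnorm_sq)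
    show ?thesis unfolding e using res by (simp only: V_def funpow_0)
  qed
  show ?thesis
  proof (intro conjI allI impI)
    fix k l x show "(S 1 ^^ k) ((S 2 ^^ l) ((T 2 ^^ l) ((T 1 ^^ k) x)))
          = (S 1 ^^ k) ((T 1 ^^ k) x) + (S 2 ^^ l) ((T 2 ^^ l) x) - x"
      by (rule partI[THEN conjunct1])
  next
    fix k l x show "(S 1 ^^ k) ((S 2 ^^ l) ((T 2 ^^ l) ((T 1 ^^ k) x)))
          = of_nat k *\<^sub>C S 1 (T 1 x) + of_nat l *\<^sub>C S 2 (T 2 x)
            - (of_nat k + of_nat l - 1) *\<^sub>C x"
      by (rule partI[THEN conjunct2])
  next
    fix f0 m n p q
    assume prem: "S 1 f0 = 0 \<and> S 2 f0 = 0
        \<and> (\<forall>q m p. q \<ge> 1 \<longrightarrow>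
              cinner ((T 1 ^^ m) f0) ((T 1 ^^ p) ((T 2 ^^ q) f0)) = 0)
        \<and> (\<forall>p n q. p \<ge> 1 \<longrightarrow>
              cinner ((T 2 ^^ n) f0) ((T 1 ^^ p) ((T 2 ^^ q) f0)) = 0)"
    show "cinner ((T 1 ^^ m) ((T 2 ^^ n) f0)) ((T 1 ^^ p) ((T 2 ^^ q) f0))
            = (if m \<noteq> p \<and> n \<noteq> q then 0
               else if m = p \<and> n \<noteq> q then cinner ((T 2 ^^ n) f0) ((T 2 ^^ q) f0)
               else if m \<noteq> p \<and> n = q then cinner ((T 1 ^^ m) f0) ((T 1 ^^ p) f0)
               else complex_of_real (cnorm ((T 1 ^^ m) f0) ^ 2 + cnorm ((T 2 ^^ n) f0) ^ 2
                                     - cnorm f0 ^ 2))"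
      by (rule partII[unfolded A_def B_def SA_def SB_def, OF prem[THEN conjunct1]
          prem[THEN conjunct2, THEN conjunct1] prem[THEN conjunct2, THEN conjunct2, THEN conjunct1]
          prem[THEN conjunct2, THEN conjunct2, THEN conjunct2]])
  qed
qed

end
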